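(* Let $H$ be a CQG Hopf $*$-algebra. The Yetter–Drinfeld modules $(H,\rhd,\Delta_H)$ and $(\mathcal{I},\bar\rhd,\delta_{\mathcal{I}})$ (described in the context) are isomorphic in ${}_H\mathrm{YD}^H$ if and only if $H$ is of Kac type, i.e. its invariant state $\Phi_H$ is tracial ($\Phi_H(hk)=\Phi_H(kh)$ for all $h,k\in H$).
   Context: A CQG Hopf $*$-algebra is a complex Hopf algebra $(H,\Delta_H,\varepsilon_H,S_H)$ with an anti-linear involution making it a $*$-algebra with $\Delta_H$ a $*$-homomorphism, admitting a state $\Phi_H$ with $(\Phi_H\otimes\mathrm{id})\Delta_H(h)=\Phi_H(h)1=(\mathrm{id}\otimes\Phi_H)\Delta_H(h)$; $S_H$ is invertible. Sweedler notation $\Delta_H(h)=h_{(1)}\otimes h_{(2)}$. ${}_H\mathrm{YD}^H$ is the category of left $H$-modules $V$ with right $H$-comodule structure $v\mapsto v_{(0)}\otimes v_{(1)}$ such that $(hv)_{(0)}\otimes(hv)_{(1)}=h_{(2)}v_{(0)}\otimes h_{(3)}v_{(1)}S_H^{-1}(h_{(1)})$; morphisms are module and comodule maps. $H$ is an object via $h\rhd k=h_{(2)}kS_H^{-1}(h_{(1)})$ and $\Delta_H$. The restricted dual $\mathcal{I}=\{\Phi_H(a\,-):a\in H\}$ of linear functionals on $H$ is an algebra under convolution $(\omega\chi)(h)=(\omega\otimes\chi)\Delta_H(h)$; it carries the unique right $H$-comodule structure $\delta_{\mathcal{I}}(\omega)=\omega_{(0)}\otimes\omega_{(1)}$ with $\chi\omega=\chi(\omega_{(1)})\omega_{(0)}$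 for all $\chi\in\mathcal{I}$, and the left $H$-action $(h\,\bar\rhd\,\omega)(k)=\omega(S_H^{-1}(h_{(2)})kh_{(1)})$; with these, $\mathcal{I}\in{}_H\mathrm{YD}^H$. *)

theory Defs
  imports Complex_Main
begin

text \<open>The Hopf algebra H is the carrier type 'h (a unital ring) together with a complex scalar
  multiplication sc.  Elements of a tensor product V (x) W are represented by finite lists of
  pairs (Sweedler sums); two such lists denote the same tensor iff they agree under every pair of
  linear functionals (linear functionals separate points of V (x) W over a field).\<close>

definition lin :: "(complex \<Rightarrow> 'v \<Rightarrow> 'v) \<Rightarrow> ('v::plus \<Rightarrow> complex) \<Rightarrow> bool" where
  "lin sc f \<longleftrightarrow> (\<forall>x y. f (x + y) = f x + f y) \<and> (\<forall>c x. f (sc c x) = c * f x)"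

definition lin_dual :: "(('h \<Rightarrow> complex) \<Rightarrow> complex) \<Rightarrow> bool" where
  "lin_dual F \<longleftrightarrow> (\<forall>\<omega> \<chi>. F (\<lambda>x. \<omega> x + \<chi> x) = F \<omega> + F \<chi>) \<and> (\<forall>c \<omega>. F (\<lambda>x. c * \<omega> x) = c * F \<omega>)"

definition ten2 :: "('a \<Rightarrow> complex) \<Rightarrow> ('b \<Rightarrow> complex) \<Rightarrow> ('a \<times> 'b) list \<Rightarrow> complex" where
  "ten2 f g t = sum_list (map (\<lambda>(a, b). f a * g b) t)"

definition teq :: "(complex \<Rightarrow> 'h \<Rightarrow> 'h) \<Rightarrow> ('h::plus \<times> 'h) list \<Rightarrow> ('h \<times> 'h) list \<Rightarrow> bool" where
  "teq sc t u \<longleftrightarrow> (\<forall>f g. lin sc f \<longrightarrow> lin sc g \<longrightarrow> ten2 f g t = ten2 f g u)"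

definition calg :: "(complex \<Rightarrow> 'h::ring_1 \<Rightarrow> 'h) \<Rightarrow> bool" where
  "calg sc \<longleftrightarrow> (\<forall>c x y. sc c (x + y) = sc c x + sc c y) \<and> (\<forall>c d x. sc (c + d) x = sc c x + sc d x)
     \<and> (\<forall>c d x. sc c (sc d x) = sc (c * d) x) \<and> (\<forall>x. sc 1 x = x)
     \<and> (\<forall>c x y. sc c (x * y) = sc c x * y) \<and> (\<forall>c x y. sc c (x * y) = x * sc c y)"

definition CQG_Hopf_star_algebra ::
  "(complex \<Rightarrow> 'h::ring_1 \<Rightarrow> 'h) \<Rightarrow> ('h \<Rightarrow> ('h \<times> 'h) list) \<Rightarrow> ('h \<Rightarrow> complex) \<Rightarrow> ('h \<Rightarrow> 'h)
    \<Rightarrow> ('h \<Rightarrow> 'h) \<Rightarrow> ('h \<Rightarrow> complex) \<Rightarrow> bool" where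
  "CQG_Hopf_star_algebra sc \<Delta> \<epsilon> S st \<Phi> \<longleftrightarrow>
     calg sc
     \<comment> \<open>comultiplication: linear, coassociative, unital and multiplicative\<close>
     \<and> (\<forall>h k. teq sc (\<Delta> (h + k)) (\<Delta> h @ \<Delta> k))
     \<and> (\<forall>c h. teq sc (\<Delta> (sc c h)) (map (\<lambda>(a, b). (sc c a, b)) (\<Delta> h)))
     \<and> (\<forall>h f g k. lin sc f \<longrightarrow> lin sc g \<longrightarrow> lin sc k \<longrightarrow>
          sum_list (map (\<lambda>(a, b). ten2 f g (\<Delta> a) * k b) (\<Delta> h))
          = sum_list (map (\<lambda>(a, b). f a * ten2 g k (\<Delta> b)) (\<Delta> h)))
     \<and> teq sc (\<Delta> 1) [(1, 1)]
     \<and> (\<forall>h k. teq sc (\<Delta> (h * k)) [(a * c, b * d). (a, b) \<leftarrow> \<Delta> h, (c, d) \<leftarrow> \<Delta> k])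
     \<comment> \<open>counit: linear, multiplicative, counital\<close>
     \<and> lin sc \<epsilon> \<and> \<epsilon> 1 = 1 \<and> (\<forall>h k. \<epsilon> (h * k) = \<epsilon> h * \<epsilon> k)
     \<and> (\<forall>h. sum_list (map (\<lambda>(a, b). sc (\<epsilon> a) b) (\<Delta> h)) = h)
     \<and> (\<forall>h. sum_list (map (\<lambda>(a, b). sc (\<epsilon> b) a) (\<Delta> h)) = h)
     \<comment> \<open>antipode: linear, antipode identities, invertible\<close>
     \<and> (\<forall>h k. S (h + k) = S h + S k) \<and> (\<forall>c h. S (sc c h) = sc c (S h))
     \<and> (\<forall>h. sum_list (map (\<lambda>(a, b). S a * b) (\<Delta> h)) = sc (\<epsilon> h) 1)
     \<and> (\<forall>h. sum_list (map (\<lambda>(a, b). a * S b) (\<Delta> h)) = sc (\<epsilon> h) 1)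
     \<and> bij S
     \<comment> \<open>star: anti-linear, anti-multiplicative involution; comultiplication is a star-map\<close>
     \<and> (\<forall>h k. st (h + k) = st h + st k) \<and> (\<forall>c h. st (sc c h) = sc (cnj c) (st h))
     \<and> (\<forall>h k. st (h * k) = st k * st h) \<and> (\<forall>h. st (st h) = h)
     \<and> (\<forall>h. teq sc (\<Delta> (st h)) (map (\<lambda>(a, b). (st a, st b)) (\<Delta> h)))
     \<comment> \<open>Phi is a state (positive normalised linear functional) which is bi-invariant\<close>
     \<and> lin sc \<Phi> \<and> \<Phi> 1 = 1
     \<and> (\<forall>h. Im (\<Phi> (st h * h)) = 0 \<and> Re (\<Phi> (st h * h)) \<ge> 0)
     \<and> (\<forall>h. sum_list (map (\<lambda>(a, b). sc (\<Phi> a) b) (\<Delta> h)) = sc (\<Phi> h) 1)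
     \<and> (\<forall>h. sum_list (map (\<lambda>(a, b). sc (\<Phi> b) a) (\<Delta> h)) = sc (\<Phi> h) 1)"

definition dual_I :: "('h::times \<Rightarrow> complex) \<Rightarrow> ('h \<Rightarrow> complex) set" where
  "dual_I \<Phi> = {(\<lambda>h. \<Phi> (a * h)) | a. True}"

definition conv :: "('h \<Rightarrow> ('h \<times> 'h) list) \<Rightarrow> ('h \<Rightarrow> complex) \<Rightarrow> ('h \<Rightarrow> complex) \<Rightarrow> 'h \<Rightarrow> complex" where
  "conv \<Delta> \<omega> \<chi> h = sum_list (map (\<lambda>(a, b). \<omega> a * \<chi> b) (\<Delta> h))"

text \<open>delta is (a Sweedler representation of) the right H-comodule structure on I characterised by
  chi omega = chi(omega_(1)) omega_(0) for all chi in I, with omega_(0) in I.\<close>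
definition dual_coaction ::
  "('h \<Rightarrow> ('h \<times> 'h) list) \<Rightarrow> ('h::times \<Rightarrow> complex)
    \<Rightarrow> (('h \<Rightarrow> complex) \<Rightarrow> (('h \<Rightarrow> complex) \<times> 'h) list) \<Rightarrow> bool" where
  "dual_coaction \<Delta> \<Phi> \<delta> \<longleftrightarrow>
     (\<forall>\<omega> \<in> dual_I \<Phi>. fst ` set (\<delta> \<omega>) \<subseteq> dual_I \<Phi>
        \<and> (\<forall>\<chi> \<in> dual_I \<Phi>. \<forall>h. conv \<Delta> \<chi> \<omega> h = sum_list (map (\<lambda>(\<omega>', k). \<chi> k * \<omega>' h) (\<delta> \<omega>))))"

definition act_H :: "('h \<Rightarrow> ('h \<times> 'h) list) \<Rightarrow> ('h::{times,monoid_add} \<Rightarrow> 'h) \<Rightarrow> 'h \<Rightarrow> 'h \<Rightarrow> 'h" where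
  "act_H \<Delta> S h k = sum_list (map (\<lambda>(a, b). b * k * inv S a) (\<Delta> h))"

definition act_I :: "('h \<Rightarrow> ('h \<times> 'h) list) \<Rightarrow> ('h::times \<Rightarrow> 'h) \<Rightarrow> 'h \<Rightarrow> ('h \<Rightarrow> complex) \<Rightarrow> 'h \<Rightarrow> complex" where
  "act_I \<Delta> S h \<omega> k = sum_list (map (\<lambda>(a, b). \<omega> (inv S b * k * a)) (\<Delta> h))"

definition YD_isomorphic ::
  "(complex \<Rightarrow> 'h::ring_1 \<Rightarrow> 'h) \<Rightarrow> ('h \<Rightarrow> ('h \<times> 'h) list) \<Rightarrow> ('h \<Rightarrow> 'h) \<Rightarrow> ('h \<Rightarrow> complex)
    \<Rightarrow> (('h \<Rightarrow> complex) \<Rightarrow> (('h \<Rightarrow> complex) \<times> 'h) list) \<Rightarrow> bool" where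
  "YD_isomorphic sc \<Delta> S \<Phi> \<delta> \<longleftrightarrow>
     (\<exists>\<phi> :: 'h \<Rightarrow> ('h \<Rightarrow> complex).
        (\<forall>h k. \<phi> (h + k) = (\<lambda>x. \<phi> h x + \<phi> k x))
      \<and> (\<forall>c h. \<phi> (sc c h) = (\<lambda>x. c * \<phi> h x))
      \<and> bij_betw \<phi> UNIV (dual_I \<Phi>)
      \<and> (\<forall>h k. \<phi> (act_H \<Delta> S h k) = act_I \<Delta> S h (\<phi> k))
      \<and> (\<forall>h F g. lin_dual F \<longrightarrow> lin sc g \<longrightarrow>
           ten2 F g (\<delta> (\<phi> h)) = ten2 (\<lambda>a. F (\<phi> a)) g (\<Delta> h)))"

definition Kac_type :: "('h::times \<Rightarrow> complex) \<Rightarrow> bool" where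
  "Kac_type \<Phi> \<longleftrightarrow> (\<forall>h k. \<Phi> (h * k) = \<Phi> (k * h))"

end

theory Submission
  imports Defs
begin


definition SW :: "('a \<times> 'b) list \<Rightarrow> ('a \<Rightarrow> 'b \<Rightarrow> 'c::comm_monoid_add) \<Rightarrow> 'c" where
  "SW t f = sum_list (map (\<lambda>(a,b). f a b) t)"

lemma SW_Nil[simp]: "SW [] f = 0" by (simp add: SW_def)
lemma SW_Cons[simp]: "SW (p#t) f = f (fst p) (snd p) + SW t f" by (simp add: SW_def split_beta)
lemma SW_append[simp]: "SW (t@u) f = SW t f + SW u f" by (simp add: SW_def)
lemma SW_add: "SW t (\<lambda>a b. f a b + g a b) = SW t f + SW t g"
  by (induct t) (auto simp: algebra_simps)
lemma SW_zero[simp]: "SW t (\<lambda>a b. 0) = 0" by (induct t) auto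
lemma SW_cong: "(\<And>a b. (a,b) \<in> set t \<Longrightarrow> f a b = g a b) \<Longrightarrow> SW t f = SW t g"
  unfolding SW_def by (intro arg_cong[where f=sum_list] map_cong) auto
lemma SW_diff: "SW t (\<lambda>a b. f a b - (g a b::'c::ab_group_add)) = SW t f - SW t g"
  by (induct t) (auto simp: algebra_simps)
lemma SW_mult_left: "(x::'c::semiring_0) * SW t f = SW t (\<lambda>a b. x * f a b)"
  by (induct t) (auto simp: algebra_simps)
lemma SW_mult_right: "SW t f * (x::'c::semiring_0) = SW t (\<lambda>a b. f a b * x)"
  by (induct t) (auto simp: algebra_simps)
lemma SW_hom: "(\<And>x y. g (x+y) = g x + g y) \<Longrightarrow> g 0 = 0 \<Longrightarrow> g (SW t f) = SW t (\<lambda>a b. g (f a b))"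
  by (induct t) auto
lemma SW_swap: "SW t (\<lambda>a b. SW u (\<lambda>c d. f a b c d)) = SW u (\<lambda>c d. SW t (\<lambda>a b. f a b c d))"
  by (induct t) (auto simp: SW_add)
lemma SW_sum: "SW t (\<lambda>a b. \<Sum>e\<in>E. f e a b) = (\<Sum>e\<in>E. SW t (f e))"
  by (induct t) (auto simp: sum.distrib)
lemma SW_map: "SW (map (\<lambda>(a,b). (p a b, q a b)) t) f = SW t (\<lambda>a b. f (p a b) (q a b))"
  by (induct t) (auto simp: split_beta)
lemma SW_prodaux: "SW (map (\<lambda>b. (x * fst b, y * snd b)) u) f = SW u (\<lambda>c d. f (x*c) (y*d))"
  by (induct u) auto
lemma SW_prodlist: "SW [(a * c, b * d). (a, b) \<leftarrow> t, (c, d) \<leftarrow> u] f = SW t (\<lambda>a b. SW u (\<lambda>c d. f (a*c) (b*d)))"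
  by (induct t) (simp_all add: split_beta SW_prodaux)
lemma ten2_SW: "ten2 f g t = SW t (\<lambda>a b. f a * g b)" by (simp add: ten2_def SW_def)
lemma SW_sum_def: "sum_list (map (\<lambda>(a,b). f a b) t) = SW t f" by (simp add: SW_def)

lemma hom_sum: assumes "\<And>x y. g (x+y) = g x + g y" "g 0 = 0"
  shows "g (sum f E) = (\<Sum>e\<in>E. g (f e))"
proof (cases "finite E")
  case True then show ?thesis by (induct E) (auto simp: assms)
qed (simp add: assms)

locale cqg =
  fixes sc :: "complex \<Rightarrow> 'h::ring_1 \<Rightarrow> 'h"
    and \<Delta> :: "'h \<Rightarrow> ('h \<times> 'h) list"
    and \<epsilon> :: "'h \<Rightarrow> complex"
    and S st :: "'h \<Rightarrow> 'h"
    and \<Phi> :: "'h \<Rightarrow> complex"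
  assumes ax: "CQG_Hopf_star_algebra sc \<Delta> \<epsilon> S st \<Phi>"
begin

lemma calg: "calg sc" using ax by (simp add: CQG_Hopf_star_algebra_def)
lemma sc_add_right: "sc c (x + y) = sc c x + sc c y" using calg by (simp add: calg_def)
lemma sc_add_left: "sc (c + d) x = sc c x + sc d x" using calg by (simp add: calg_def)
lemma sc_sc[simp]: "sc c (sc d x) = sc (c * d) x" using calg by (simp add: calg_def)
lemma sc_one[simp]: "sc 1 x = x" using calg by (simp add: calg_def)
lemma sc_mult_left[simp]: "sc c x * y = sc c (x * y)" using calg by (simp add: calg_def)
lemma sc_mult_right[simp]: "x * sc c y = sc c (x * y)" using calg unfolding calg_def by metis

sublocale V: vector_space sc
  by unfold_locales (auto simp: sc_add_right sc_add_left)

lemma sc_zero_left[simp]: "sc 0 x = 0" by (rule V.scale_zero_left)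
lemma sc_zero_right[simp]: "sc c 0 = 0" by (rule V.scale_zero_right)

lemma coassoc_ax: "lin sc f \<Longrightarrow> lin sc g \<Longrightarrow> lin sc k \<Longrightarrow>
  SW (\<Delta> h) (\<lambda>a b. SW (\<Delta> a) (\<lambda>c d. f c * g d) * k b) = SW (\<Delta> h) (\<lambda>a b. f a * SW (\<Delta> b) (\<lambda>c d. g c * k d))"
  using ax unfolding CQG_Hopf_star_algebra_def by (simp add: SW_def ten2_def)
lemma Delta_one_ax: "teq sc (\<Delta> 1) [(1, 1)]" using ax unfolding CQG_Hopf_star_algebra_def by simp
lemma Delta_mult_ax: "teq sc (\<Delta> (h * k)) [(a * c, b * d). (a, b) \<leftarrow> \<Delta> h, (c, d) \<leftarrow> \<Delta> k]"
  using ax unfolding CQG_Hopf_star_algebra_def by simp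
lemma eps_lin: "lin sc \<epsilon>" using ax unfolding CQG_Hopf_star_algebra_def by simp
lemma eps_one[simp]: "\<epsilon> 1 = 1" using ax unfolding CQG_Hopf_star_algebra_def by simp
lemma eps_mult[simp]: "\<epsilon> (h * k) = \<epsilon> h * \<epsilon> k" using ax unfolding CQG_Hopf_star_algebra_def by simp
lemma counitL: "SW (\<Delta> h) (\<lambda>a b. sc (\<epsilon> a) b) = h" using ax unfolding CQG_Hopf_star_algebra_def SW_def by simp
lemma counitR: "SW (\<Delta> h) (\<lambda>a b. sc (\<epsilon> b) a) = h" using ax unfolding CQG_Hopf_star_algebra_def SW_def by simp
lemma S_add[simp]: "S (h + k) = S h + S k" using ax unfolding CQG_Hopf_star_algebra_def by simp
lemma S_sc[simp]: "S (sc c h) = sc c (S h)" using ax unfolding CQG_Hopf_star_algebra_def by simp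
lemma antL: "SW (\<Delta> h) (\<lambda>a b. S a * b) = sc (\<epsilon> h) 1" using ax unfolding CQG_Hopf_star_algebra_def SW_def by simp
lemma antR: "SW (\<Delta> h) (\<lambda>a b. a * S b) = sc (\<epsilon> h) 1" using ax unfolding CQG_Hopf_star_algebra_def SW_def by simp
lemma S_bij: "bij S" using ax unfolding CQG_Hopf_star_algebra_def by simp
lemma st_add[simp]: "st (h + k) = st h + st k" using ax unfolding CQG_Hopf_star_algebra_def by simp
lemma st_sc[simp]: "st (sc c h) = sc (cnj c) (st h)" using ax unfolding CQG_Hopf_star_algebra_def by simp
lemma st_mult[simp]: "st (h * k) = st k * st h" using ax unfolding CQG_Hopf_star_algebra_def by simp
lemma st_st[simp]: "st (st h) = h" using ax unfolding CQG_Hopf_star_algebra_def by simp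
lemma Phi_lin: "lin sc \<Phi>" using ax unfolding CQG_Hopf_star_algebra_def by simp
lemma Phi_one[simp]: "\<Phi> 1 = 1" using ax unfolding CQG_Hopf_star_algebra_def by simp
lemma Phi_pos: "Im (\<Phi> (st h * h)) = 0 \<and> Re (\<Phi> (st h * h)) \<ge> 0" using ax unfolding CQG_Hopf_star_algebra_def by simp
lemma invL: "SW (\<Delta> h) (\<lambda>a b. sc (\<Phi> a) b) = sc (\<Phi> h) 1" using ax unfolding CQG_Hopf_star_algebra_def SW_def by simp
lemma invR: "SW (\<Delta> h) (\<lambda>a b. sc (\<Phi> b) a) = sc (\<Phi> h) 1" using ax unfolding CQG_Hopf_star_algebra_def SW_def by simp

lemma Phi_add[simp]: "\<Phi> (x + y) = \<Phi> x + \<Phi> y" using Phi_lin by (simp add: lin_def)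
lemma Phi_sc[simp]: "\<Phi> (sc c x) = c * \<Phi> x" using Phi_lin by (simp add: lin_def)
lemma eps_add[simp]: "\<epsilon> (x + y) = \<epsilon> x + \<epsilon> y" using eps_lin by (simp add: lin_def)
lemma eps_sc[simp]: "\<epsilon> (sc c x) = c * \<epsilon> x" using eps_lin by (simp add: lin_def)

lemma lin_zero: "lin sc f \<Longrightarrow> f 0 = 0"
  unfolding lin_def by (metis mult_zero_left sc_zero_left)
lemma Phi_zero[simp]: "\<Phi> 0 = 0" by (rule lin_zero[OF Phi_lin])
lemma eps_zero[simp]: "\<epsilon> 0 = 0" by (rule lin_zero[OF eps_lin])
lemma S_zero[simp]: "S 0 = 0" by (metis S_sc sc_zero_left)
lemma st_zero[simp]: "st 0 = 0" by (metis st_sc sc_zero_left complex_cnj_zero)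

lemma lin_SW: "lin sc f \<Longrightarrow> f (SW t g) = SW t (\<lambda>a b. f (g a b))"
  by (rule SW_hom) (auto simp: lin_def lin_zero)
lemma Phi_SW[simp]: "\<Phi> (SW t g) = SW t (\<lambda>a b. \<Phi> (g a b))" by (rule lin_SW[OF Phi_lin])
lemma eps_SW[simp]: "\<epsilon> (SW t g) = SW t (\<lambda>a b. \<epsilon> (g a b))" by (rule lin_SW[OF eps_lin])
lemma S_SW[simp]: "S (SW t g) = SW t (\<lambda>a b. S (g a b))" by (rule SW_hom) auto
lemma sc_SW[simp]: "sc c (SW t g) = SW t (\<lambda>a b. sc c (g a b))" by (rule SW_hom) (auto simp: sc_add_right)
lemma st_SW[simp]: "st (SW t g) = SW t (\<lambda>a b. st (g a b))" by (rule SW_hom) auto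

definition Bs where "Bs = (SOME B. V.independent B \<and> V.span B = UNIV)"
lemma Bs: "V.independent Bs \<and> V.span Bs = UNIV"
proof -
  obtain B where "V.independent B" "UNIV \<subseteq> V.span B" using V.basis_exists[of UNIV] by blast
  then have "\<exists>B. V.independent B \<and> V.span B = UNIV" by blast
  then show ?thesis unfolding Bs_def by (rule someI_ex)
qed
definition co :: "'h \<Rightarrow> 'h \<Rightarrow> complex" where "co e x = V.representation Bs x e"

lemma co_add[simp]: "co e (x + y) = co e x + co e y"
  using Bs by (simp add: co_def V.representation_add)
lemma co_sc[simp]: "co e (sc c x) = c * co e x"
  using Bs by (simp add: co_def V.representation_scale)
lemma lin_co: "lin sc (co e)" by (simp add: lin_def)
lemma co_fin: "finite {e. co e x \<noteq> 0}"
  by (simp add: co_def V.finite_representation)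
lemma co_expand: assumes "finite E" "{e. co e x \<noteq> 0} \<subseteq> E"
  shows "(\<Sum>e\<in>E. sc (co e x) e) = x"
proof -
  have "(\<Sum>e\<in>E. sc (co e x) e) = (\<Sum>e\<in>{e. co e x \<noteq> 0}. sc (co e x) e)"
    by (rule sum.mono_neutral_right) (use assms in auto)
  also have "\<dots> = x" using Bs V.sum_nonzero_representation_eq[of Bs x] by (simp add: co_def)
  finally show ?thesis .
qed
lemma sep: assumes "\<And>e. co e x = co e y" shows "x = y"
proof -
  have "x = (\<Sum>e\<in>{e. co e x \<noteq> 0}. sc (co e x) e)" using co_expand[OF co_fin[of x] order_refl] by simp
  also have "\<dots> = (\<Sum>e\<in>{e. co e y \<noteq> 0}. sc (co e y) e)" using assms by simp
  also have "\<dots> = y" using co_expand[OF co_fin[of y] order_refl] by simp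
  finally show ?thesis .
qed
lemma sep_lin: "(\<And>f. lin sc f \<Longrightarrow> f x = f y) \<Longrightarrow> x = y"
  using sep lin_co by blast

lemma expand: assumes "lin sc g" "finite E" "{e. co e x \<noteq> 0} \<subseteq> E"
  shows "g x = (\<Sum>e\<in>E. co e x * g e)"
proof -
  have "g x = g (\<Sum>e\<in>E. sc (co e x) e)" using co_expand[OF assms(2,3)] by simp
  also have "\<dots> = (\<Sum>e\<in>E. g (sc (co e x) e))"
    by (rule hom_sum) (use assms(1) lin_zero in \<open>auto simp: lin_def\<close>)
  also have "\<dots> = (\<Sum>e\<in>E. co e x * g e)" using assms(1) by (simp add: lin_def)
  finally show ?thesis .
qed

definition "linH g \<longleftrightarrow> (\<forall>x y. g (x+y) = g x + g y) \<and> (\<forall>c x. g (sc c x) = sc c (g x))"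
definition "bilC \<beta> \<longleftrightarrow> (\<forall>z. lin sc (\<lambda>x. \<beta> x z)) \<and> (\<forall>z. lin sc (\<beta> z))"
definition "trilC \<gamma> \<longleftrightarrow> (\<forall>y z. lin sc (\<lambda>x. \<gamma> x y z)) \<and> (\<forall>x z. lin sc (\<lambda>y. \<gamma> x y z)) \<and> (\<forall>x y. lin sc (\<gamma> x y))"
definition "bilH \<beta> \<longleftrightarrow> (\<forall>z. linH (\<lambda>x. \<beta> x z)) \<and> (\<forall>z. linH (\<beta> z))"
definition "trilH \<gamma> \<longleftrightarrow> (\<forall>y z. linH (\<lambda>x. \<gamma> x y z)) \<and> (\<forall>x z. linH (\<lambda>y. \<gamma> x y z)) \<and> (\<forall>x y. linH (\<gamma> x y))"

lemma linH_co: "linH g \<Longrightarrow> lin sc (\<lambda>x. co e (g x))" by (simp add: linH_def lin_def)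
lemma bilH_co: "bilH \<beta> \<Longrightarrow> bilC (\<lambda>x y. co e (\<beta> x y))" by (simp add: bilH_def bilC_def linH_co)
lemma trilH_co: "trilH \<gamma> \<Longrightarrow> trilC (\<lambda>x y z. co e (\<gamma> x y z))" by (simp add: trilH_def trilC_def linH_co)

definition "supp x = {e. co e x \<noteq> 0}"

lemma bil_expand: assumes "bilC \<beta>" "finite E" "supp x \<subseteq> E" "supp y \<subseteq> E"
  shows "\<beta> x y = (\<Sum>e1\<in>E. \<Sum>e2\<in>E. (co e1 x * co e2 y) * \<beta> e1 e2)"
proof -
  have "\<beta> x y = (\<Sum>e1\<in>E. co e1 x * \<beta> e1 y)"
    using expand[of "\<lambda>x. \<beta> x y"] assms by (simp add: bilC_def supp_def)
  also have "\<dots> = (\<Sum>e1\<in>E. co e1 x * (\<Sum>e2\<in>E. co e2 y * \<beta> e1 e2))"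
    using expand[of "\<beta> _" E y] assms by (simp add: bilC_def supp_def)
  finally show ?thesis by (simp add: sum_distrib_left mult.assoc)
qed

lemma tril_expand: assumes "trilC \<gamma>" "finite E" "supp x \<subseteq> E" "supp y \<subseteq> E" "supp z \<subseteq> E"
  shows "\<gamma> x y z = (\<Sum>e1\<in>E. \<Sum>e2\<in>E. \<Sum>e3\<in>E. (co e1 x * co e2 y * co e3 z) * \<gamma> e1 e2 e3)"
proof -
  have "\<gamma> x y z = (\<Sum>e1\<in>E. co e1 x * \<gamma> e1 y z)"
    using expand[of "\<lambda>x. \<gamma> x y z"] assms by (simp add: trilC_def supp_def)
  also have "\<dots> = (\<Sum>e1\<in>E. co e1 x * (\<Sum>e2\<in>E. co e2 y * \<gamma> e1 e2 z))"
    using expand[of "\<lambda>y. \<gamma> _ y z" E y] assms by (simp add: trilC_def supp_def)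
  also have "\<dots> = (\<Sum>e1\<in>E. co e1 x * (\<Sum>e2\<in>E. co e2 y * (\<Sum>e3\<in>E. co e3 z * \<gamma> e1 e2 e3)))"
    using expand[of "\<gamma> _ _" E z] assms by (simp add: trilC_def supp_def)
  finally show ?thesis by (simp add: sum_distrib_left mult.assoc)
qed

lemma fin_supp: "finite (supp x)" by (simp add: supp_def co_fin)

lemma bil_transfer_C: assumes "teq sc t u" "bilC \<beta>" shows "SW t \<beta> = SW u \<beta>"
proof -
  define E where "E = (\<Union>p\<in>set t \<union> set u. supp (fst p) \<union> supp (snd p))"
  have fE: "finite E" unfolding E_def by (auto simp: fin_supp)
  have k: "\<beta> a b = (\<Sum>e1\<in>E. \<Sum>e2\<in>E. (co e1 a * co e2 b) * \<beta> e1 e2)" if "(a,b) \<in> set t \<union> set u" for a b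
    by (rule bil_expand[OF assms(2) fE]) (use that in \<open>auto simp: E_def\<close>)
  have "SW v \<beta> = (\<Sum>e1\<in>E. \<Sum>e2\<in>E. SW v (\<lambda>a b. co e1 a * co e2 b) * \<beta> e1 e2)"
    if "set v \<subseteq> set t \<union> set u" for v
  proof -
    have "SW v \<beta> = SW v (\<lambda>a b. \<Sum>e1\<in>E. \<Sum>e2\<in>E. (co e1 a * co e2 b) * \<beta> e1 e2)"
      by (rule SW_cong) (use k that in auto)
    then show ?thesis by (simp add: SW_sum SW_mult_right)
  qed
  moreover have "SW t (\<lambda>a b. co e1 a * co e2 b) = SW u (\<lambda>a b. co e1 a * co e2 b)" for e1 e2
    using assms(1) lin_co unfolding teq_def ten2_SW by blast
  ultimately show ?thesis by simp
qed

lemma bil_transfer: assumes "teq sc t u" "bilH \<beta>" shows "SW t \<beta> = SW u \<beta>"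
proof (rule sep)
  fix e
  show "co e (SW t \<beta>) = co e (SW u \<beta>)"
    using bil_transfer_C[OF assms(1) bilH_co[OF assms(2)]] by (simp add: lin_SW[OF lin_co])
qed

lemma coassoc_C: assumes "trilC \<gamma>"
  shows "SW (\<Delta> h) (\<lambda>a b. SW (\<Delta> a) (\<lambda>c d. \<gamma> c d b)) = SW (\<Delta> h) (\<lambda>a b. SW (\<Delta> b) (\<lambda>c d. \<gamma> a c d))"
proof -
  define P where "P = set (\<Delta> h) \<union> (\<Union>p\<in>set (\<Delta> h). set (\<Delta> (fst p)) \<union> set (\<Delta> (snd p)))"
  define E where "E = (\<Union>p\<in>P. supp (fst p) \<union> supp (snd p))"
  have fE: "finite E" unfolding E_def P_def by (auto simp: fin_supp)
  have k: "\<gamma> x y z = (\<Sum>e1\<in>E. \<Sum>e2\<in>E. \<Sum>e3\<in>E. (co e1 x * co e2 y * co e3 z) * \<gamma> e1 e2 e3)"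
    if "supp x \<subseteq> E" "supp y \<subseteq> E" "supp z \<subseteq> E" for x y z
    by (rule tril_expand[OF assms fE that])
  have sE1: "supp a \<subseteq> E" "supp b \<subseteq> E" if "(a,b) \<in> set (\<Delta> h)" for a b
    using that unfolding E_def P_def by force+
  have sE2: "supp c \<subseteq> E" "supp d \<subseteq> E" if "(a,b) \<in> set (\<Delta> h)" "(c,d) \<in> set (\<Delta> a)" for a b c d
    using that unfolding E_def P_def by force+
  have sE3: "supp c \<subseteq> E" "supp d \<subseteq> E" if "(a,b) \<in> set (\<Delta> h)" "(c,d) \<in> set (\<Delta> b)" for a b c d
    using that unfolding E_def P_def by force+
  have "SW (\<Delta> h) (\<lambda>a b. SW (\<Delta> a) (\<lambda>c d. \<gamma> c d b)) =
     SW (\<Delta> h) (\<lambda>a b. SW (\<Delta> a) (\<lambda>c d. \<Sum>e1\<in>E. \<Sum>e2\<in>E. \<Sum>e3\<in>E. (co e1 c * co e2 d * co e3 b) * \<gamma> e1 e2 e3))"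
    by (intro SW_cong k) (auto dest: sE1 sE2)
  also have "\<dots> = (\<Sum>e1\<in>E. \<Sum>e2\<in>E. \<Sum>e3\<in>E. SW (\<Delta> h) (\<lambda>a b. SW (\<Delta> a) (\<lambda>c d. co e1 c * co e2 d) * co e3 b) * \<gamma> e1 e2 e3)"
    by (simp add: SW_sum SW_mult_right)
  also have "\<dots> = (\<Sum>e1\<in>E. \<Sum>e2\<in>E. \<Sum>e3\<in>E. SW (\<Delta> h) (\<lambda>a b. co e1 a * SW (\<Delta> b) (\<lambda>c d. co e2 c * co e3 d)) * \<gamma> e1 e2 e3)"
    by (simp add: coassoc_ax lin_co)
  also have "\<dots> = SW (\<Delta> h) (\<lambda>a b. SW (\<Delta> b) (\<lambda>c d. \<Sum>e1\<in>E. \<Sum>e2\<in>E. \<Sum>e3\<in>E. (co e1 a * co e2 c * co e3 d) * \<gamma> e1 e2 e3))"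
    by (simp add: SW_sum SW_mult_right SW_mult_left mult.assoc)
  also have "\<dots> = SW (\<Delta> h) (\<lambda>a b. SW (\<Delta> b) (\<lambda>c d. \<gamma> a c d))"
    by (intro SW_cong k[symmetric]) (auto dest: sE1 sE3)
  finally show ?thesis .
qed

lemma coassoc: assumes "trilH \<gamma>"
  shows "SW (\<Delta> h) (\<lambda>a b. SW (\<Delta> a) (\<lambda>c d. \<gamma> c d b)) = SW (\<Delta> h) (\<lambda>a b. SW (\<Delta> b) (\<lambda>c d. \<gamma> a c d))"
proof (rule sep)
  fix e
  show "co e (SW (\<Delta> h) (\<lambda>a b. SW (\<Delta> a) (\<lambda>c d. \<gamma> c d b))) = co e (SW (\<Delta> h) (\<lambda>a b. SW (\<Delta> b) (\<lambda>c d. \<gamma> a c d)))"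
    using coassoc_C[OF trilH_co[OF assms, of e]] by (simp add: lin_SW[OF lin_co])
qed

lemma Delta_mult: assumes "bilH \<beta>"
  shows "SW (\<Delta> (h * k)) \<beta> = SW (\<Delta> h) (\<lambda>a b. SW (\<Delta> k) (\<lambda>c d. \<beta> (a*c) (b*d)))"
  using bil_transfer[OF Delta_mult_ax assms] by (simp add: SW_prodlist)

lemma Delta_one: assumes "bilH \<beta>" shows "SW (\<Delta> 1) \<beta> = \<beta> 1 1"
  using bil_transfer[OF Delta_one_ax assms] by simp

end



context cqg begin

lemma linH_id: "linH (\<lambda>x. x)" by (simp add: linH_def)
lemma linH_multL: "linH g \<Longrightarrow> linH (\<lambda>x. g x * c)" by (simp add: linH_def distrib_right)
lemma linH_multR: "linH g \<Longrightarrow> linH (\<lambda>x. c * g x)" by (simp add: linH_def distrib_left)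
lemma linH_S: "linH g \<Longrightarrow> linH (\<lambda>x. S (g x))" by (simp add: linH_def)
lemma linH_SW: "(\<And>a b. linH (\<lambda>x. F x a b)) \<Longrightarrow> linH (\<lambda>x. SW t (F x))"
  unfolding linH_def by (auto simp: SW_add[symmetric] intro!: SW_cong)
lemma linH_scC: "lin sc \<phi> \<Longrightarrow> linH g \<Longrightarrow> linH (\<lambda>x. sc (\<phi> (g x)) c)"
  by (simp add: linH_def lin_def sc_add_left)
lemma linH_scK: "linH g \<Longrightarrow> linH (\<lambda>x. sc k (g x))"
  by (simp add: linH_def sc_add_right mult.commute)
lemma lin_comp: "lin sc \<phi> \<Longrightarrow> linH g \<Longrightarrow> lin sc (\<lambda>x. \<phi> (g x))" by (simp add: linH_def lin_def)

lemma S_inj: "S x = S y \<Longrightarrow> x = y" using S_bij by (metis bij_def injD)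
lemma S_Si[simp]: "S (inv S x) = x" using S_bij by (simp add: bij_def surj_f_inv_f)
lemma Si_S[simp]: "inv S (S x) = x" using S_bij by (simp add: bij_def inv_f_f)
lemma Si_add[simp]: "inv S (x + y) = inv S x + inv S y" by (rule S_inj) simp
lemma Si_sc[simp]: "inv S (sc c x) = sc c (inv S x)" by (rule S_inj) simp
lemma Si_zero[simp]: "inv S 0 = 0" by (rule S_inj) simp
lemma Si_SW[simp]: "inv S (SW t g) = SW t (\<lambda>a b. inv S (g a b))" by (rule SW_hom) auto
lemma linH_Si: "linH g \<Longrightarrow> linH (\<lambda>x. inv S (g x))" by (simp add: linH_def)

lemmas linH_intros = linH_id linH_multL linH_multR linH_S linH_Si linH_SW linH_scC linH_scK
  lin_comp Phi_lin eps_lin lin_co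

lemma S_one[simp]: "S 1 = 1"
proof -
  have "SW (\<Delta> 1) (\<lambda>a b. S a * b) = S 1 * 1"
    by (rule Delta_one) (auto simp: bilH_def intro!: linH_intros)
  then show ?thesis using antL[of 1] by simp
qed
lemma Si_one[simp]: "inv S 1 = 1" by (rule S_inj) simp

lemma L2: "SW (\<Delta> b) (\<lambda>b1 b2. SW (\<Delta> d) (\<lambda>d1 d2. b1 * d1 * (S d2 * S b2))) = sc (\<epsilon> b * \<epsilon> d) 1"
proof -
  have "SW (\<Delta> d) (\<lambda>d1 d2. b1 * d1 * (S d2 * S b2)) = b1 * SW (\<Delta> d) (\<lambda>d1 d2. d1 * S d2) * S b2" for b1 b2
    by (simp add: SW_mult_left SW_mult_right mult.assoc)
  then have "SW (\<Delta> b) (\<lambda>b1 b2. SW (\<Delta> d) (\<lambda>d1 d2. b1 * d1 * (S d2 * S b2))) =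
     SW (\<Delta> b) (\<lambda>b1 b2. sc (\<epsilon> d) (b1 * S b2))" by (simp add: antR)
  also have "\<dots> = sc (\<epsilon> d) (SW (\<Delta> b) (\<lambda>b1 b2. b1 * S b2))" by simp
  finally show ?thesis by (simp add: antR mult.commute)
qed

lemma S_mult: "S (x * y) = S y * S x"
proof -
  define G where "G = (\<lambda>a b1 b2 c d1 d2. S(a*c) * (b1 * d1 * (S d2 * S b2)))"
  have "x * y = SW (\<Delta> x) (\<lambda>a b. sc (\<epsilon> b) a) * SW (\<Delta> y) (\<lambda>c d. sc (\<epsilon> d) c)"
    by (simp add: counitR)
  also have "\<dots> = SW (\<Delta> x) (\<lambda>a b. SW (\<Delta> y) (\<lambda>c d. sc (\<epsilon> b * \<epsilon> d) (a * c)))"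
    by (simp add: SW_mult_left SW_mult_right SW_swap[of "\<Delta> y"] mult.commute)
  finally have "S (x * y) = SW (\<Delta> x) (\<lambda>a b. SW (\<Delta> y) (\<lambda>c d. S (a * c) * sc (\<epsilon> b * \<epsilon> d) 1))"
    by simp
  also have "\<dots> = SW (\<Delta> x) (\<lambda>a b. SW (\<Delta> y) (\<lambda>c d. SW (\<Delta> b) (\<lambda>b1 b2. SW (\<Delta> d) (\<lambda>d1 d2. G a b1 b2 c d1 d2))))"
    unfolding G_def by (simp add: L2[symmetric] SW_mult_left)
  also have "\<dots> = SW (\<Delta> x) (\<lambda>a b. SW (\<Delta> b) (\<lambda>b1 b2. SW (\<Delta> y) (\<lambda>c d. SW (\<Delta> d) (\<lambda>d1 d2. G a b1 b2 c d1 d2))))"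
    by (simp add: SW_swap[of "\<Delta> y"])
  also have "\<dots> = SW (\<Delta> x) (\<lambda>a b. SW (\<Delta> b) (\<lambda>b1 b2. SW (\<Delta> y) (\<lambda>c d. SW (\<Delta> c) (\<lambda>c1 c2. G a b1 b2 c1 c2 d))))"
    by (subst coassoc[symmetric]) (auto simp: G_def trilH_def intro!: linH_intros)
  also have "\<dots> = SW (\<Delta> x) (\<lambda>a b. SW (\<Delta> a) (\<lambda>a1 a2. SW (\<Delta> y) (\<lambda>c d. SW (\<Delta> c) (\<lambda>c1 c2. G a1 a2 b c1 c2 d))))"
    by (subst coassoc[symmetric]) (auto simp: G_def trilH_def intro!: linH_intros)
  also have "\<dots> = SW (\<Delta> x) (\<lambda>a b. SW (\<Delta> y) (\<lambda>c d. SW (\<Delta> (a * c)) (\<lambda>u v. S u * v) * (S d * S b)))"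
  proof -
    have "SW (\<Delta> (a * c)) (\<lambda>u v. S u * v) = SW (\<Delta> a) (\<lambda>a1 a2. SW (\<Delta> c) (\<lambda>c1 c2. S (a1*c1) * (a2 * c2)))" for a c
      by (rule Delta_mult) (auto simp: bilH_def intro!: linH_intros)
    then show ?thesis unfolding G_def
      by (simp add: SW_mult_right SW_swap[of "\<Delta> y"] mult.assoc)
  qed
  also have "\<dots> = SW (\<Delta> x) (\<lambda>a b. SW (\<Delta> y) (\<lambda>c d. sc (\<epsilon> c) (S d) * sc (\<epsilon> a) (S b)))"
    by (simp add: antL mult.commute)
  also have "\<dots> = SW (\<Delta> y) (\<lambda>c d. sc (\<epsilon> c) (S d)) * SW (\<Delta> x) (\<lambda>a b. sc (\<epsilon> a) (S b))"
    by (simp add: SW_mult_left SW_mult_right SW_swap[of "\<Delta> y"] mult.commute)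
  also have "\<dots> = S y * S x"
  proof -
    have ey: "S y = SW (\<Delta> y) (\<lambda>c d. sc (\<epsilon> c) (S d))"
    proof -
      have "S y = S (SW (\<Delta> y) (\<lambda>c d. sc (\<epsilon> c) d))" by (simp only: counitL)
      then show ?thesis by simp
    qed
    have ex: "S x = SW (\<Delta> x) (\<lambda>c d. sc (\<epsilon> c) (S d))"
    proof -
      have "S x = S (SW (\<Delta> x) (\<lambda>c d. sc (\<epsilon> c) d))" by (simp only: counitL)
      then show ?thesis by simp
    qed
    show ?thesis by (simp only: ex ey)
  qed
  finally show ?thesis .
qed

end



context cqg begin

lemma lin_diff: "lin sc f \<Longrightarrow> f (x - y) = f x - f y"
  unfolding lin_def by (metis add_diff_cancel diff_add_cancel eq_diff_eq)
lemma Phi_diff[simp]: "\<Phi> (x - y) = \<Phi> x - \<Phi> y" by (rule lin_diff[OF Phi_lin])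
lemma eps_diff[simp]: "\<epsilon> (x - y) = \<epsilon> x - \<epsilon> y" by (rule lin_diff[OF eps_lin])
lemma S_diff[simp]: "S (x - y) = S x - S y" by (metis S_add diff_add_cancel eq_diff_eq)
lemma Si_diff[simp]: "inv S (x - y) = inv S x - inv S y" by (metis Si_add diff_add_cancel eq_diff_eq)
lemma co_diff[simp]: "co e (x - y) = co e x - co e y" by (rule lin_diff[OF lin_co])

lemma Si_mult: "inv S (x * y) = inv S y * inv S x"
  by (rule S_inj) (simp add: S_mult)

lemma H2a: "SW (\<Delta> b) (\<lambda>c d. d * inv S c) = sc (\<epsilon> b) 1"
  by (rule S_inj) (simp add: S_mult antR)
lemma H2b: "SW (\<Delta> b) (\<lambda>c d. inv S d * c) = sc (\<epsilon> b) 1"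
  by (rule S_inj) (simp add: S_mult antL)

lemma sc_SW_left[simp]: "sc (SW t f) x = SW t (\<lambda>a b. sc (f a b) x)"
  by (rule SW_hom[where g="\<lambda>c. sc c x"]) (auto simp: sc_add_left)

lemma Phi_scone[simp]: "\<Phi> (sc c 1) = c" by simp

lemma VD2': "SW (\<Delta> x) (\<lambda>p q. sc (\<Phi> (a*p)) q) = SW (\<Delta> a) (\<lambda>p q. sc (\<Phi> (p*x)) (inv S q))"
proof -
  have "SW (\<Delta> a) (\<lambda>p q. sc (\<Phi> (p*x)) (inv S q)) = SW (\<Delta> a) (\<lambda>a1 a2. inv S a2 * SW (\<Delta> (a1 * x)) (\<lambda>u v. sc (\<Phi> u) v))"
    by (simp add: invL)
  also have "\<dots> = SW (\<Delta> a) (\<lambda>a1 a2. SW (\<Delta> a1) (\<lambda>c d. SW (\<Delta> x) (\<lambda>p q. inv S a2 * sc (\<Phi> (c*p)) (d*q))))"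
  proof -
    have "SW (\<Delta> (a1 * x)) (\<lambda>u v. inv S a2 * sc (\<Phi> u) v) = SW (\<Delta> a1) (\<lambda>c d. SW (\<Delta> x) (\<lambda>p q. inv S a2 * sc (\<Phi> (c*p)) (d*q)))" for a1 a2
      by (rule Delta_mult) (auto simp: bilH_def intro!: linH_intros)
    then show ?thesis by (simp add: SW_mult_left)
  qed
  also have "\<dots> = SW (\<Delta> a) (\<lambda>a1 a2. SW (\<Delta> a2) (\<lambda>c d. SW (\<Delta> x) (\<lambda>p q. inv S d * sc (\<Phi> (a1*p)) (c*q))))"
    by (subst coassoc) (auto simp: trilH_def intro!: linH_intros)
  also have "\<dots> = SW (\<Delta> a) (\<lambda>a1 a2. SW (\<Delta> x) (\<lambda>p q. sc (\<Phi> (a1*p)) (SW (\<Delta> a2) (\<lambda>c d. inv S d * c) * q)))"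
    by (intro SW_cong, simp add: SW_mult_right mult.assoc, rule SW_swap)
  also have "\<dots> = SW (\<Delta> a) (\<lambda>a1 a2. SW (\<Delta> x) (\<lambda>p q. sc (\<Phi> (sc (\<epsilon> a2) a1 * p)) q))"
    by (simp add: H2b mult.commute)
  also have "\<dots> = SW (\<Delta> x) (\<lambda>p q. sc (\<Phi> (SW (\<Delta> a) (\<lambda>a1 a2. sc (\<epsilon> a2) a1) * p)) q)"
    by (simp add: SW_mult_right SW_swap[of "\<Delta> a"])
  finally show ?thesis by (simp add: counitR)
qed

end



context cqg begin

lemma Delta_add_ax: "teq sc (\<Delta> (h + k)) (\<Delta> h @ \<Delta> k)" using ax unfolding CQG_Hopf_star_algebra_def by simp
lemma Delta_sc_ax: "teq sc (\<Delta> (sc c h)) (map (\<lambda>(a, b). (sc c a, b)) (\<Delta> h))" using ax unfolding CQG_Hopf_star_algebra_def by simp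

lemma linH_zero: "linH g \<Longrightarrow> g 0 = 0" unfolding linH_def by (metis sc_zero_left)

lemma linH_Delta: assumes "bilH \<beta>" shows "linH (\<lambda>z. SW (\<Delta> z) \<beta>)"
proof -
  have "SW (\<Delta> (sc c h)) \<beta> = sc c (SW (\<Delta> h) \<beta>)" for c h
  proof -
    have "SW (\<Delta> (sc c h)) \<beta> = SW (map (\<lambda>(a, b). (sc c a, b)) (\<Delta> h)) \<beta>"
      by (rule bil_transfer[OF Delta_sc_ax assms])
    also have "\<dots> = SW (\<Delta> h) (\<lambda>a b. \<beta> (sc c a) b)" by (simp add: SW_map)
    also have "\<dots> = sc c (SW (\<Delta> h) \<beta>)" using assms by (simp add: bilH_def linH_def)
    finally show ?thesis .
  qed
  then show ?thesis unfolding linH_def using bil_transfer[OF Delta_add_ax assms] by simp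
qed

lemma expandH: assumes "linH g" "finite E" "supp x \<subseteq> E"
  shows "g x = (\<Sum>e\<in>E. sc (co e x) (g e))"
proof -
  have "g x = g (\<Sum>e\<in>E. sc (co e x) e)" using co_expand[OF assms(2)] assms(3) by (simp add: supp_def)
  also have "\<dots> = (\<Sum>e\<in>E. g (sc (co e x) e))"
    by (rule hom_sum) (use assms(1) linH_zero in \<open>auto simp: linH_def\<close>)
  also have "\<dots> = (\<Sum>e\<in>E. sc (co e x) (g e))" using assms(1) by (simp add: linH_def)
  finally show ?thesis .
qed

lemma linH_SWsc: assumes "linH g" shows "g (SW t (\<lambda>a b. sc (k a b) (f a b))) = SW t (\<lambda>a b. sc (k a b) (g (f a b)))"
proof -
  have "g (SW t (\<lambda>a b. sc (k a b) (f a b))) = SW t (\<lambda>a b. g (sc (k a b) (f a b)))"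
    by (rule SW_hom) (use assms linH_zero in \<open>auto simp: linH_def\<close>)
  then show ?thesis using assms by (simp add: linH_def)
qed

definition "Eof t = (\<Union>p\<in>set t. supp (fst p) \<union> supp (snd p))"
lemma Eof_fin: "finite (Eof t)" by (auto simp: Eof_def fin_supp)
lemma Eof_sub: "(a,b) \<in> set t \<Longrightarrow> supp a \<subseteq> Eof t" "(a,b) \<in> set t \<Longrightarrow> supp b \<subseteq> Eof t"
  by (force simp: Eof_def)+

lemma VD1': "SW (\<Delta> x) (\<lambda>p q. sc (\<Phi> (q*a)) p) = SW (\<Delta> a) (\<lambda>p q. sc (\<Phi> (x*q)) (inv S p))"
proof -
  have "SW (\<Delta> a) (\<lambda>p q. sc (\<Phi> (x*q)) (inv S p)) = SW (\<Delta> a) (\<lambda>a1 a2. SW (\<Delta> (x*a2)) (\<lambda>u v. sc (\<Phi> v) u) * inv S a1)"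
    by (simp add: invR)
  also have "\<dots> = SW (\<Delta> a) (\<lambda>a1 a2. SW (\<Delta> x) (\<lambda>p q. SW (\<Delta> a2) (\<lambda>c d. sc (\<Phi> (q*d)) (p*c) * inv S a1)))"
  proof -
    have "SW (\<Delta> (x * a2)) (\<lambda>u v. sc (\<Phi> v) u * inv S a1) = SW (\<Delta> x) (\<lambda>p q. SW (\<Delta> a2) (\<lambda>c d. sc (\<Phi> (q*d)) (p*c) * inv S a1))" for a1 a2
      by (rule Delta_mult) (auto simp: bilH_def intro!: linH_intros)
    then show ?thesis by (simp add: SW_mult_right)
  qed
  also have "\<dots> = SW (\<Delta> a) (\<lambda>a1 a2. SW (\<Delta> a2) (\<lambda>c d. SW (\<Delta> x) (\<lambda>p q. sc (\<Phi> (q*d)) (p*c) * inv S a1)))"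
    by (intro SW_cong, rule SW_swap)
  also have "\<dots> = SW (\<Delta> a) (\<lambda>a1 a2. SW (\<Delta> a1) (\<lambda>c d. SW (\<Delta> x) (\<lambda>p q. sc (\<Phi> (q*a2)) (p*d) * inv S c)))"
    by (subst coassoc[symmetric]) (auto simp: trilH_def intro!: linH_intros)
  also have "\<dots> = SW (\<Delta> a) (\<lambda>a1 a2. SW (\<Delta> x) (\<lambda>p q. sc (\<Phi> (q*a2)) (p * SW (\<Delta> a1) (\<lambda>c d. d * inv S c))))"
    by (intro SW_cong, simp add: SW_mult_left mult.assoc, rule SW_swap)
  also have "\<dots> = SW (\<Delta> a) (\<lambda>a1 a2. SW (\<Delta> x) (\<lambda>p q. sc (\<Phi> (q * sc (\<epsilon> a1) a2)) p))"
    by (simp add: H2a mult.commute)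
  also have "\<dots> = SW (\<Delta> x) (\<lambda>p q. sc (\<Phi> (q * SW (\<Delta> a) (\<lambda>a1 a2. sc (\<epsilon> a1) a2))) p)"
    by (simp add: SW_mult_left SW_swap[of "\<Delta> a"])
  finally show ?thesis by (simp add: counitL)
qed

lemma VD2: "SW (\<Delta> x) (\<lambda>p q. sc (\<Phi> (p*a)) q) = SW (\<Delta> a) (\<lambda>p q. sc (\<Phi> (x*p)) (S q))"
proof -
  have "SW (\<Delta> a) (\<lambda>p q. sc (\<Phi> (x*p)) (S q)) = SW (\<Delta> a) (\<lambda>a1 a2. SW (\<Delta> (x*a1)) (\<lambda>u v. sc (\<Phi> u) v) * S a2)"
    by (simp add: invL)
  also have "\<dots> = SW (\<Delta> a) (\<lambda>a1 a2. SW (\<Delta> x) (\<lambda>p q. SW (\<Delta> a1) (\<lambda>c d. sc (\<Phi> (p*c)) (q*d) * S a2)))"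
  proof -
    have "SW (\<Delta> (x * a1)) (\<lambda>u v. sc (\<Phi> u) v * S a2) = SW (\<Delta> x) (\<lambda>p q. SW (\<Delta> a1) (\<lambda>c d. sc (\<Phi> (p*c)) (q*d) * S a2))" for a1 a2
      by (rule Delta_mult) (auto simp: bilH_def intro!: linH_intros)
    then show ?thesis by (simp add: SW_mult_right)
  qed
  also have "\<dots> = SW (\<Delta> a) (\<lambda>a1 a2. SW (\<Delta> a1) (\<lambda>c d. SW (\<Delta> x) (\<lambda>p q. sc (\<Phi> (p*c)) (q*d) * S a2)))"
    by (intro SW_cong, rule SW_swap)
  also have "\<dots> = SW (\<Delta> a) (\<lambda>a1 a2. SW (\<Delta> a2) (\<lambda>c d. SW (\<Delta> x) (\<lambda>p q. sc (\<Phi> (p*a1)) (q*c) * S d)))"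
    by (subst coassoc) (auto simp: trilH_def intro!: linH_intros)
  also have "\<dots> = SW (\<Delta> a) (\<lambda>a1 a2. SW (\<Delta> x) (\<lambda>p q. sc (\<Phi> (p*a1)) (q * SW (\<Delta> a2) (\<lambda>c d. c * S d))))"
    by (intro SW_cong, simp add: SW_mult_left mult.assoc, rule SW_swap)
  also have "\<dots> = SW (\<Delta> a) (\<lambda>a1 a2. SW (\<Delta> x) (\<lambda>p q. sc (\<Phi> (p * sc (\<epsilon> a2) a1)) q))"
    by (simp add: antR mult.commute)
  also have "\<dots> = SW (\<Delta> x) (\<lambda>p q. sc (\<Phi> (p * SW (\<Delta> a) (\<lambda>a1 a2. sc (\<epsilon> a2) a1))) q)"
    by (simp add: SW_mult_left SW_swap[of "\<Delta> a"])
  finally show ?thesis by (simp add: counitR)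
qed

end



context cqg begin

lemma sc_zero_fun[simp]: "sc 0 = (\<lambda>x. 0)" by (rule ext) simp

lemma F_right: assumes "\<And>x. \<Phi> (a*x) = 0" shows "a = 0"
proof -
  have V: "SW (\<Delta> a) (\<lambda>p q. sc (\<Phi> (p*x)) q) = 0" for x
  proof -
    have "SW (\<Delta> a) (\<lambda>p q. sc (\<Phi> (p*x)) (inv S q)) = 0" using VD2'[of x a] assms by simp
    then have "S (SW (\<Delta> a) (\<lambda>p q. sc (\<Phi> (p*x)) (inv S q))) = 0" by simp
    then show ?thesis by simp
  qed
  define G where "G y z = SW (\<Delta> z) (\<lambda>c d. sc (\<Phi> (y * S c)) d)" for y z
  have A: "a = SW (\<Delta> a) (\<lambda>a1 a2. G a1 a2)"
  proof -
    have "SW (\<Delta> a) (\<lambda>a1 a2. G a1 a2) = SW (\<Delta> a) (\<lambda>a1 a2. SW (\<Delta> a1) (\<lambda>c d. sc (\<Phi> (c * S d)) a2))"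
      unfolding G_def by (subst coassoc[symmetric]) (auto simp: trilH_def intro!: linH_intros)
    also have "\<dots> = SW (\<Delta> a) (\<lambda>a1 a2. sc (\<Phi> (SW (\<Delta> a1) (\<lambda>c d. c * S d))) a2)" by simp
    also have "\<dots> = a" by (simp add: antR counitL)
    finally show ?thesis by simp
  qed
  define E where "E = Eof (\<Delta> a)"
  have linG2: "linH (G y)" for y unfolding G_def
    by (rule linH_Delta) (auto simp: bilH_def intro!: linH_intros)
  have linG1: "linH (\<lambda>y. G y z)" for z unfolding G_def by (auto intro!: linH_intros)
  have "SW (\<Delta> a) (\<lambda>a1 a2. G a1 a2) = SW (\<Delta> a) (\<lambda>a1 a2. \<Sum>e\<in>E. sc (co e a2) (G a1 e))"
    by (intro SW_cong expandH[OF linG2]) (auto simp: E_def Eof_fin dest: Eof_sub[THEN subsetD])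
  also have "\<dots> = (\<Sum>e\<in>E. SW (\<Delta> a) (\<lambda>a1 a2. sc (co e a2) (G a1 e)))" by (simp add: SW_sum)
  also have "\<dots> = (\<Sum>e\<in>E. G (SW (\<Delta> a) (\<lambda>a1 a2. sc (co e a2) a1)) e)"
    by (intro sum.cong refl linH_SWsc[OF linG1, symmetric])
  also have "\<dots> = 0"
  proof (intro sum.neutral ballI)
    fix e
    have "\<Phi> (SW (\<Delta> a) (\<lambda>a1 a2. sc (co e a2) a1) * y) = 0" for y
    proof -
      have "\<Phi> (SW (\<Delta> a) (\<lambda>a1 a2. sc (co e a2) a1) * y) = co e (SW (\<Delta> a) (\<lambda>p q. sc (\<Phi> (p*y)) q))"
        by (simp add: SW_mult_right lin_SW[OF lin_co] mult.commute)
      then show ?thesis using V by (simp add: lin_zero[OF lin_co])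
    qed
    then show "G (SW (\<Delta> a) (\<lambda>a1 a2. sc (co e a2) a1)) e = 0"
      unfolding G_def by (simp add: mult.assoc[symmetric])
  qed
  finally show ?thesis using A by simp
qed

lemma F_left: assumes "\<And>x. \<Phi> (x*a) = 0" shows "a = 0"
proof -
  have V: "SW (\<Delta> a) (\<lambda>p q. sc (\<Phi> (x*q)) p) = 0" for x
  proof -
    have "SW (\<Delta> a) (\<lambda>p q. sc (\<Phi> (x*q)) (inv S p)) = 0" using VD1'[of x a] assms by simp
    then have "S (SW (\<Delta> a) (\<lambda>p q. sc (\<Phi> (x*q)) (inv S p))) = 0" by simp
    then show ?thesis by simp
  qed
  define G where "G z y = SW (\<Delta> z) (\<lambda>c d. sc (\<Phi> (S d * y)) c)" for y z
  have A: "a = SW (\<Delta> a) (\<lambda>a1 a2. G a1 a2)"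
  proof -
    have "SW (\<Delta> a) (\<lambda>a1 a2. G a1 a2) = SW (\<Delta> a) (\<lambda>a1 a2. SW (\<Delta> a2) (\<lambda>c d. sc (\<Phi> (S c * d)) a1))"
      unfolding G_def by (subst coassoc) (auto simp: trilH_def intro!: linH_intros)
    also have "\<dots> = SW (\<Delta> a) (\<lambda>a1 a2. sc (\<Phi> (SW (\<Delta> a2) (\<lambda>c d. S c * d))) a1)" by simp
    also have "\<dots> = a" by (simp add: antL counitR)
    finally show ?thesis by simp
  qed
  define E where "E = Eof (\<Delta> a)"
  have linG1: "linH (\<lambda>z. G z y)" for y unfolding G_def
    by (rule linH_Delta) (auto simp: bilH_def intro!: linH_intros)
  have linG2: "linH (G z)" for z unfolding G_def by (auto intro!: linH_intros)
  have "SW (\<Delta> a) (\<lambda>a1 a2. G a1 a2) = SW (\<Delta> a) (\<lambda>a1 a2. \<Sum>e\<in>E. sc (co e a1) (G e a2))"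
    by (intro SW_cong expandH[OF linG1]) (auto simp: E_def Eof_fin dest: Eof_sub[THEN subsetD])
  also have "\<dots> = (\<Sum>e\<in>E. SW (\<Delta> a) (\<lambda>a1 a2. sc (co e a1) (G e a2)))" by (simp add: SW_sum)
  also have "\<dots> = (\<Sum>e\<in>E. G e (SW (\<Delta> a) (\<lambda>a1 a2. sc (co e a1) a2)))"
    by (intro sum.cong refl linH_SWsc[OF linG2, symmetric])
  also have "\<dots> = 0"
  proof (intro sum.neutral ballI)
    fix e
    have "\<Phi> (y * SW (\<Delta> a) (\<lambda>a1 a2. sc (co e a1) a2)) = 0" for y
    proof -
      have "\<Phi> (y * SW (\<Delta> a) (\<lambda>a1 a2. sc (co e a1) a2)) = co e (SW (\<Delta> a) (\<lambda>p q. sc (\<Phi> (y*q)) p))"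
        by (simp add: SW_mult_left lin_SW[OF lin_co] mult.commute)
      then show ?thesis using V by (simp add: lin_zero[OF lin_co])
    qed
    then show "G e (SW (\<Delta> a) (\<lambda>a1 a2. sc (co e a1) a2)) = 0"
      unfolding G_def by (simp add: mult.assoc)
  qed
  finally show ?thesis using A by simp
qed

lemma Phi_Si[simp]: "\<Phi> (inv S a) = \<Phi> a"
proof -
  define W where "W = SW (\<Delta> a) (\<lambda>p q. sc (\<Phi> (inv S p)) q)"
  have "\<Phi> (x * (W - sc (\<Phi> a) 1)) = 0" for x
  proof -
    have "\<Phi> (SW (\<Delta> x) (\<lambda>p q. sc (\<Phi> (q*a)) p)) = \<Phi> (SW (\<Delta> a) (\<lambda>p q. sc (\<Phi> (x*q)) (inv S p)))"
      by (simp only: VD1')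
    moreover have "\<Phi> (SW (\<Delta> x) (\<lambda>p q. sc (\<Phi> (q*a)) p)) = \<Phi> (SW (\<Delta> x) (\<lambda>p q. sc (\<Phi> p) q) * a)"
      by (simp add: SW_mult_right mult.commute)
    moreover have "\<Phi> (SW (\<Delta> a) (\<lambda>p q. sc (\<Phi> (x*q)) (inv S p))) = \<Phi> (x * W)"
      unfolding W_def by (simp add: SW_mult_left mult.commute)
    ultimately have "\<Phi> (x * W) = \<Phi> x * \<Phi> a" by (simp add: invL)
    then show ?thesis by (simp add: right_diff_distrib)
  qed
  then have "W - sc (\<Phi> a) 1 = 0" by (rule F_left)
  then have "\<epsilon> W = \<Phi> a" by simp
  moreover have "\<epsilon> W = \<Phi> (inv S (SW (\<Delta> a) (\<lambda>p q. sc (\<epsilon> q) p)))"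
    unfolding W_def by (simp add: mult.commute)
  ultimately show ?thesis by (simp add: counitR)
qed

lemma Phi_S[simp]: "\<Phi> (S a) = \<Phi> a" by (metis Phi_Si Si_S)

end



context cqg begin

lemma Si_eq_iff: "inv S x = y \<longleftrightarrow> x = S y" by (metis S_Si Si_S)

lemma M_lemma: assumes inv: "\<And>h x. SW (\<Delta> h) (\<lambda>a b. \<Phi> (inv S b * x * a)) = \<epsilon> h * \<Phi> x"
  shows "\<Phi> (x * a) = \<Phi> (inv S (inv S a) * x)"
proof -
  have "\<Phi> (inv S (inv S a) * x) = SW (\<Delta> a) (\<lambda>a1 a2. \<epsilon> a1 * \<Phi> (inv S (inv S a2) * x))"
  proof -
    have "inv S (inv S a) * x = inv S (inv S (SW (\<Delta> a) (\<lambda>a1 a2. sc (\<epsilon> a1) a2))) * x" by (simp only: counitL)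
    then show ?thesis by (simp add: SW_mult_right)
  qed
  also have "\<dots> = SW (\<Delta> a) (\<lambda>a1 a2. SW (\<Delta> a1) (\<lambda>c d. \<Phi> (inv S d * (inv S (inv S a2) * x) * c)))"
    by (simp add: inv)
  also have "\<dots> = SW (\<Delta> a) (\<lambda>a1 a2. SW (\<Delta> a2) (\<lambda>c d. \<Phi> (inv S c * (inv S (inv S d) * x) * a1)))"
    by (rule coassoc_C) (auto simp: trilC_def intro!: linH_intros)
  also have "\<dots> = SW (\<Delta> a) (\<lambda>a1 a2. \<Phi> (SW (\<Delta> a2) (\<lambda>c d. inv S c * inv S (inv S d)) * x * a1))"
    by (simp add: SW_mult_right mult.assoc)
  also have "\<dots> = SW (\<Delta> a) (\<lambda>a1 a2. \<Phi> (sc (\<epsilon> a2) (x * a1)))"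
  proof -
    have "SW (\<Delta> b) (\<lambda>c d. inv S c * inv S (inv S d)) = sc (\<epsilon> b) 1" for b
    proof -
      have "SW (\<Delta> b) (\<lambda>c d. inv S c * inv S (inv S d)) = inv S (SW (\<Delta> b) (\<lambda>c d. inv S d * c))"
        by (simp add: Si_mult)
      then show ?thesis by (simp add: H2b)
    qed
    then show ?thesis by simp
  qed
  also have "\<dots> = \<Phi> (x * SW (\<Delta> a) (\<lambda>a1 a2. sc (\<epsilon> a2) a1))" by (simp add: SW_mult_left)
  finally show ?thesis by (simp add: counitR)
qed

lemma lin_bound: assumes "\<And>s::real. p + s * q \<ge> 0" shows "q = 0"
proof (rule ccontr)
  assume "q \<noteq> 0"
  have "p + (- (\<bar>p\<bar> + 1) / q) * q \<ge> 0" by (rule assms)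
  moreover have "p + (- (\<bar>p\<bar> + 1) / q) * q = p - (\<bar>p\<bar> + 1)" using \<open>q \<noteq> 0\<close> by simp
  ultimately show False by linarith
qed

lemma CS: assumes "\<Phi> (st y * y) = 0" shows "\<Phi> (st b * y) = 0"
proof -
  define A where "A = \<Phi> (st b * y)"
  define B where "B = \<Phi> (st y * b)"
  define P0 where "P0 = \<Phi> (st b * b)"
  have P: "Im (P0 + t * A + cnj t * B) = 0 \<and> Re (P0 + t * A + cnj t * B) \<ge> 0" for t
  proof -
    have "st (b + sc t y) * (b + sc t y) = st b * b + sc t (st b * y) + sc (cnj t) (st y * b) + sc (t * cnj t) (st y * y)"
      by (simp add: distrib_left distrib_right add.assoc sc_add_right)
    then have "\<Phi> (st (b + sc t y) * (b + sc t y)) = P0 + t * A + cnj t * B"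
      using assms unfolding A_def B_def P0_def by simp
    then show ?thesis using Phi_pos[of "b + sc t y"] by simp
  qed
  have P0: "Im P0 = 0" "Re P0 \<ge> 0" using P[of 0] by auto
  have r1: "Im (A + B) = 0" using P[of 1] P0 by simp
  have r2: "Re (A + B) = 0"
  proof (rule lin_bound[of "Re P0"])
    fix s :: real
    have "Re P0 + s * Re A + s * Re B \<ge> 0" using P[of "complex_of_real s"] by simp
    then show "Re P0 + s * Re (A + B) \<ge> 0" by (simp add: distrib_left)
  qed
  have i1: "Re (A - B) = 0" using P[of \<i>] P0 by simp
  have i2: "Im (A - B) = 0"
  proof -
    have "- Im (A - B) = 0"
    proof (rule lin_bound[of "Re P0"])
      fix s :: real
      have "Re P0 - s * Im A + s * Im B \<ge> 0" using P[of "\<i> * complex_of_real s"] by simp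
      moreover have "s * - Im (A - B) = - s * Im A + s * Im B" by (simp add: algebra_simps)
      ultimately show "Re P0 + s * - Im (A - B) \<ge> 0" by linarith
    qed
    then show ?thesis by simp
  qed
  have "A + B = 0" using r1 r2 by (simp add: complex_eq_iff)
  moreover have "A - B = 0" using i1 i2 by (simp add: complex_eq_iff)
  ultimately have "(A + B) + (A - B) = 0" by simp
  then have "2 * A = 0" by (simp add: algebra_simps)
  then have "A = 0" by simp
  then show ?thesis by (simp add: A_def)
qed

end



context cqg begin

lemma Phi_uminus[simp]: "\<Phi> (- x) = - \<Phi> x" using Phi_diff[of 0 x] by simp
lemma S_uminus[simp]: "S (- x) = - S x" using S_diff[of 0 x] by simp

lemma inv_imp_Kac: assumes inv: "\<And>h x. SW (\<Delta> h) (\<lambda>a b. \<Phi> (inv S b * x * a)) = \<epsilon> h * \<Phi> x"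
  shows "Kac_type \<Phi>"
proof -
  have M: "\<Phi> (x * a) = \<Phi> (inv S (inv S a) * x)" for x a by (rule M_lemma[OF inv])
  have S4: "S (S (S (S y))) = y" for y
  proof -
    have "\<Phi> (c * (y - S (S (S (S y))))) = 0" for c
    proof -
      have r1: "\<Phi> (inv S c * S y) = \<Phi> (c * y)"
        using M[of "inv S c" "S y"] by (simp add: Si_mult[symmetric])
      have r2: "\<Phi> (inv S c * S y) = \<Phi> (c * S (S (S (S y))))"
      proof -
        have "inv S c * S y = inv S (S (S y) * c)" by (simp add: Si_mult)
        then have "\<Phi> (inv S c * S y) = \<Phi> (S (S y) * c)" by simp
        also have "\<dots> = \<Phi> (c * S (S (S (S y))))" using M[of c "S (S (S (S y)))"] by simp
        finally show ?thesis .
      qed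
      show ?thesis using r1 r2 by (simp add: right_diff_distrib)
    qed
    then have "y - S (S (S (S y))) = 0" by (rule F_left)
    then show ?thesis by simp
  qed
  have S2: "S (S z) = z" for z
  proof -
    define y where "y = z - S (S z)"
    have Sy: "S (S y) = - y" unfolding y_def using S4[of z] by simp
    have Siy: "inv S (inv S y) = - y" using Sy by (simp add: Si_eq_iff)
    have "\<Phi> (st y * y) = - \<Phi> (y * st y)" using M[of "st y" y] Siy by simp
    moreover have "Re (\<Phi> (y * st y)) \<ge> 0" using Phi_pos[of "st y"] by simp
    ultimately have "\<Phi> (st y * y) = 0" using Phi_pos[of y] by (simp add: complex_eq_iff)
    then have "\<Phi> (x * y) = 0" for x using CS[of y "st x"] by simp
    then have "y = 0" by (rule F_left)
    then show ?thesis unfolding y_def by simp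
  qed
  show ?thesis unfolding Kac_type_def
  proof (intro allI)
    fix h k
    have "inv S (inv S k) = k" using S2 by (simp add: Si_eq_iff)
    then show "\<Phi> (h * k) = \<Phi> (k * h)" using M[of h k] by simp
  qed
qed

lemma lin_dual_eval: "lin_dual (\<lambda>\<omega>. \<omega> h)" by (simp add: lin_dual_def)

lemma Phi_in_I: "\<Phi> \<in> dual_I \<Phi>"
proof -
  have "\<Phi> = (\<lambda>h. \<Phi> (1 * h))" by simp
  then show ?thesis unfolding dual_I_def by blast
qed

lemma lin_I: "lin sc (\<lambda>h. \<Phi> (c * h))" by (simp add: lin_def distrib_left)

lemma YD_imp_Kac: assumes dc: "dual_coaction \<Delta> \<Phi> \<delta>" and yd: "YD_isomorphic sc \<Delta> S \<Phi> \<delta>"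
  shows "Kac_type \<Phi>"
proof -
  obtain \<phi> :: "'h \<Rightarrow> ('h \<Rightarrow> complex)" where
    l1: "\<And>h k. \<phi> (h + k) = (\<lambda>x. \<phi> h x + \<phi> k x)" and
    l2: "\<And>c h. \<phi> (sc c h) = (\<lambda>x. c * \<phi> h x)" and
    bj: "bij_betw \<phi> UNIV (dual_I \<Phi>)" and
    act: "\<And>h k. \<phi> (act_H \<Delta> S h k) = act_I \<Delta> S h (\<phi> k)" and
    coact: "\<And>h F g. lin_dual F \<Longrightarrow> lin sc g \<Longrightarrow> ten2 F g (\<delta> (\<phi> h)) = ten2 (\<lambda>a. F (\<phi> a)) g (\<Delta> h)"
    using yd unfolding YD_isomorphic_def by blast
  have "\<phi> 1 \<in> dual_I \<Phi>" using bj by (auto simp: bij_betw_def)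
  then obtain c where c: "\<phi> 1 = (\<lambda>h. \<Phi> (c * h))" unfolding dual_I_def by blast
  have cc: "\<Phi> (c * h) = \<Phi> c * \<Phi> h" for h
  proof -
    have "conv \<Delta> \<Phi> (\<phi> 1) h = sum_list (map (\<lambda>(\<omega>', k). \<Phi> k * \<omega>' h) (\<delta> (\<phi> 1)))"
      using dc \<open>\<phi> 1 \<in> dual_I \<Phi>\<close> Phi_in_I unfolding dual_coaction_def by blast
    also have "\<dots> = ten2 (\<lambda>\<omega>. \<omega> h) \<Phi> (\<delta> (\<phi> 1))"
      unfolding ten2_def by (simp add: mult.commute)
    also have "\<dots> = ten2 (\<lambda>a. \<phi> a h) \<Phi> (\<Delta> 1)" by (rule coact[OF lin_dual_eval Phi_lin])
    also have "\<dots> = \<phi> 1 h"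
    proof -
      have "bilC (\<lambda>a b. \<phi> a h * \<Phi> b)"
        by (simp add: bilC_def lin_def l1 l2 distrib_left distrib_right)
      from bil_transfer_C[OF Delta_one_ax this] show ?thesis by (simp add: ten2_SW)
    qed
    finally have "\<phi> 1 h = conv \<Delta> \<Phi> (\<phi> 1) h" ..
    also have "\<dots> = \<Phi> (c * SW (\<Delta> h) (\<lambda>p q. sc (\<Phi> p) q))"
      unfolding conv_def c by (simp add: SW_sum_def SW_mult_left)
    also have "\<dots> = \<Phi> c * \<Phi> h" by (simp add: invL mult.commute)
    finally show ?thesis using c by simp
  qed
  have phi0: "\<phi> 0 = (\<lambda>x. 0)" using l2[of 0 0] by simp
  have nz: "\<Phi> c \<noteq> 0"
  proof
    assume "\<Phi> c = 0"
    then have "\<phi> 1 = \<phi> 0" using c cc phi0 by auto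
    with bj have "(1::'h) = 0" unfolding bij_betw_def inj_on_def by blast
    then show False by simp
  qed
  have "SW (\<Delta> h) (\<lambda>a b. \<Phi> (inv S b * x * a)) = \<epsilon> h * \<Phi> x" for h x
  proof -
    have "act_H \<Delta> S h 1 = sc (\<epsilon> h) 1" unfolding act_H_def by (simp add: SW_sum_def H2a)
    then have "\<phi> (act_H \<Delta> S h 1) x = \<epsilon> h * (\<Phi> c * \<Phi> x)" using l2 c cc by simp
    moreover have "act_I \<Delta> S h (\<phi> 1) x = \<Phi> c * SW (\<Delta> h) (\<lambda>a b. \<Phi> (inv S b * x * a))"
      unfolding act_I_def c by (simp add: SW_sum_def cc SW_mult_left)
    ultimately have "\<Phi> c * SW (\<Delta> h) (\<lambda>a b. \<Phi> (inv S b * x * a)) = \<Phi> c * (\<epsilon> h * \<Phi> x)"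
      using act by (simp add: mult.left_commute)
    then show ?thesis using nz by simp
  qed
  then show ?thesis by (rule inv_imp_Kac)
qed

end



context cqg begin

lemma Kac_S2: assumes kac: "Kac_type \<Phi>" shows "S (S a) = a"
proof -
  have K: "\<Phi> (u * v) = \<Phi> (v * u)" for u v using kac by (simp add: Kac_type_def)
  have eq: "SW (\<Delta> a) (\<lambda>p q. sc (\<Phi> (p*x)) (inv S q - S q)) = 0" for x
  proof -
    have "SW (\<Delta> a) (\<lambda>p q. sc (\<Phi> (p*x)) (inv S q)) = SW (\<Delta> x) (\<lambda>p q. sc (\<Phi> (a*p)) q)"
      by (simp only: VD2')
    also have "\<dots> = SW (\<Delta> x) (\<lambda>p q. sc (\<Phi> (p*a)) q)" by (intro SW_cong) (metis K)
    also have "\<dots> = SW (\<Delta> a) (\<lambda>p q. sc (\<Phi> (x*p)) (S q))" by (simp only: VD2)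
    also have "\<dots> = SW (\<Delta> a) (\<lambda>p q. sc (\<Phi> (p*x)) (S q))" by (intro SW_cong) (metis K)
    finally show ?thesis by (simp add: V.scale_right_diff_distrib SW_diff)
  qed
  have "f (inv S a) = f (S a)" if f: "lin sc f" for f
  proof -
    define W where "W = SW (\<Delta> a) (\<lambda>p q. sc (f (inv S q - S q)) p)"
    have "\<Phi> (W * x) = f (SW (\<Delta> a) (\<lambda>p q. sc (\<Phi> (p*x)) (inv S q - S q)))" for x
      unfolding W_def using f by (simp add: SW_mult_right lin_SW lin_def mult.commute)
    then have "\<Phi> (W * x) = 0" for x using eq f lin_zero by simp
    then have "W = 0" by (rule F_right)
    then have "\<epsilon> W = 0" by simp
    moreover have "\<epsilon> W = f (SW (\<Delta> a) (\<lambda>p q. sc (\<epsilon> p) (inv S q - S q)))"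
      unfolding W_def using f by (simp add: lin_SW lin_def mult.commute)
    moreover have "SW (\<Delta> a) (\<lambda>p q. sc (\<epsilon> p) (inv S q - S q)) = inv S a - S a"
    proof -
      have "SW (\<Delta> a) (\<lambda>p q. sc (\<epsilon> p) (inv S q - S q)) = inv S (SW (\<Delta> a) (\<lambda>p q. sc (\<epsilon> p) q)) - S (SW (\<Delta> a) (\<lambda>p q. sc (\<epsilon> p) q))"
        by (simp add: V.scale_right_diff_distrib SW_diff)
      then show ?thesis by (simp only: counitL)
    qed
    ultimately have "f (inv S a - S a) = 0" by simp
    then show ?thesis using lin_diff[OF f] by simp
  qed
  then have "inv S a = S a" by (rule sep_lin)
  then show ?thesis by (metis S_Si)
qed

lemma lin_dual_SW: assumes "lin_dual F"
  shows "F (\<lambda>y. SW t (\<lambda>a b. k a b * f a b y)) = SW t (\<lambda>a b. k a b * F (f a b))"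
proof (induct t)
  case Nil
  have "F (\<lambda>y. 0 * f0 y) = 0 * F f0" for f0 using assms unfolding lin_dual_def by blast
  then show ?case by simp
next
  case (Cons p t)
  have "F (\<lambda>y. k (fst p) (snd p) * f (fst p) (snd p) y + SW t (\<lambda>a b. k a b * f a b y))
     = F (\<lambda>y. k (fst p) (snd p) * f (fst p) (snd p) y) + F (\<lambda>y. SW t (\<lambda>a b. k a b * f a b y))"
  proof -
    have add: "\<And>\<omega> \<chi>. F (\<lambda>x. \<omega> x + \<chi> x) = F \<omega> + F \<chi>" using assms by (simp add: lin_dual_def)
    show ?thesis using add[of "\<lambda>y. k (fst p) (snd p) * f (fst p) (snd p) y" "\<lambda>y. SW t (\<lambda>a b. k a b * f a b y)"] by simp
  qed
  moreover have "F (\<lambda>y. k (fst p) (snd p) * f (fst p) (snd p) y) = k (fst p) (snd p) * F (f (fst p) (snd p))"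
    using assms unfolding lin_dual_def by blast
  ultimately show ?case using Cons by simp
qed

lemma Kac_imp_YD: assumes dc: "dual_coaction \<Delta> \<Phi> \<delta>" and kac: "Kac_type \<Phi>"
  shows "YD_isomorphic sc \<Delta> S \<Phi> \<delta>"
proof -
  have K: "\<Phi> (u * v) = \<Phi> (v * u)" for u v using kac by (simp add: Kac_type_def)
  have S2: "S (S a) = a" for a by (rule Kac_S2[OF kac])
  have SSi: "inv S a = S a" for a using S2 by (metis Si_S)
  define \<phi> where "\<phi> a = (\<lambda>x. \<Phi> (x * S a))" for a
  have l1: "\<phi> (h + k) = (\<lambda>x. \<phi> h x + \<phi> k x)" for h k by (simp add: \<phi>_def distrib_left)
  have l2: "\<phi> (sc c h) = (\<lambda>x. c * \<phi> h x)" for c h by (simp add: \<phi>_def)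
  have inj: "inj \<phi>"
  proof (rule injI)
    fix a b assume "\<phi> a = \<phi> b"
    then have "\<Phi> (x * (S a - S b)) = 0" for x by (simp add: \<phi>_def fun_eq_iff right_diff_distrib)
    then have "S a - S b = 0" by (rule F_left)
    then show "a = b" using S_inj by simp
  qed
  have img: "range \<phi> = dual_I \<Phi>"
  proof
    show "range \<phi> \<subseteq> dual_I \<Phi>"
    proof
      fix w assume "w \<in> range \<phi>"
      then obtain a where "w = \<phi> a" by blast
      then have "w = (\<lambda>h. \<Phi> (S a * h))" by (simp add: \<phi>_def fun_eq_iff K)
      then show "w \<in> dual_I \<Phi>" unfolding dual_I_def by blast
    qed
    show "dual_I \<Phi> \<subseteq> range \<phi>"
    proof
      fix w assume "w \<in> dual_I \<Phi>"
      then obtain b where "w = (\<lambda>h. \<Phi> (b * h))" unfolding dual_I_def by blast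
      then have "w = \<phi> (inv S b)" by (simp add: \<phi>_def fun_eq_iff K)
      then show "w \<in> range \<phi>" by blast
    qed
  qed
  have act: "\<phi> (act_H \<Delta> S h k) = act_I \<Delta> S h (\<phi> k)" for h k
  proof
    fix x
    have "\<phi> (act_H \<Delta> S h k) x = SW (\<Delta> h) (\<lambda>a b. \<Phi> (x * (a * (S k * S b))))"
      unfolding \<phi>_def act_H_def by (simp add: SW_sum_def S_mult SW_mult_left)
    also have "\<dots> = SW (\<Delta> h) (\<lambda>a b. \<Phi> (inv S b * x * a * S k))"
    proof (intro SW_cong)
      fix a b
      have "\<Phi> (inv S b * x * a * S k) = \<Phi> (inv S b * (x * a * S k))" by (simp add: mult.assoc)
      also have "\<dots> = \<Phi> ((x * a * S k) * inv S b)" by (rule K)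
      finally show "\<Phi> (x * (a * (S k * S b))) = \<Phi> (inv S b * x * a * S k)" by (simp add: SSi mult.assoc)
    qed
    also have "\<dots> = act_I \<Delta> S h (\<phi> k) x" unfolding act_I_def \<phi>_def by (simp add: SW_sum_def)
    finally show "\<phi> (act_H \<Delta> S h k) x = act_I \<Delta> S h (\<phi> k) x" .
  qed
  have key: "conv \<Delta> (\<lambda>z. \<Phi> (c*z)) (\<phi> h) y = SW (\<Delta> h) (\<lambda>p q. \<Phi> (c*q) * \<phi> p y)" for c h y
  proof -
    have "conv \<Delta> (\<lambda>z. \<Phi> (c*z)) (\<phi> h) y = SW (\<Delta> y) (\<lambda>p q. \<Phi> (c*p) * \<Phi> (S h * q))"
      unfolding conv_def \<phi>_def by (simp add: SW_sum_def K[of _ "S h"])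
    also have "\<dots> = \<Phi> (S h * SW (\<Delta> y) (\<lambda>p q. sc (\<Phi> (c*p)) q))" by (simp add: SW_mult_left)
    also have "\<dots> = \<Phi> (S h * SW (\<Delta> c) (\<lambda>p q. sc (\<Phi> (p*y)) (inv S q)))" by (simp only: VD2')
    also have "\<dots> = SW (\<Delta> c) (\<lambda>p q. \<Phi> (p*y) * \<Phi> (S h * inv S q))" by (simp add: SW_mult_left)
    also have "\<dots> = SW (\<Delta> c) (\<lambda>p q. \<Phi> (p*y) * \<Phi> (q * h))"
    proof (intro SW_cong)
      fix p q
      have "S h * inv S q = inv S (q * h)" by (simp add: Si_mult SSi S_mult)
      then show "\<Phi> (p*y) * \<Phi> (S h * inv S q) = \<Phi> (p*y) * \<Phi> (q * h)" by simp
    qed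
    also have "\<dots> = SW (\<Delta> c) (\<lambda>p q. \<Phi> (h*q) * \<Phi> (y*p))" by (intro SW_cong) (metis K mult.commute)
    also have "\<dots> = \<Phi> (y * S (SW (\<Delta> c) (\<lambda>p q. sc (\<Phi> (h*q)) (inv S p))))" by (simp add: SW_mult_left)
    also have "\<dots> = \<Phi> (y * S (SW (\<Delta> h) (\<lambda>p q. sc (\<Phi> (q*c)) p)))" by (simp only: VD1')
    also have "\<dots> = SW (\<Delta> h) (\<lambda>p q. \<Phi> (q*c) * \<Phi> (y * S p))" by (simp add: SW_mult_left)
    also have "\<dots> = SW (\<Delta> h) (\<lambda>p q. \<Phi> (c*q) * \<phi> p y)" unfolding \<phi>_def by (intro SW_cong) (metis K)
    finally show ?thesis .
  qed
  have coact: "ten2 F g (\<delta> (\<phi> h)) = ten2 (\<lambda>a. F (\<phi> a)) g (\<Delta> h)" if F: "lin_dual F" and g: "lin sc g" for h F g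
  proof -
    define D where "D = \<delta> (\<phi> h)"
    have hI: "\<phi> h \<in> dual_I \<Phi>" using img by blast
    define wD where "wD = SW D (\<lambda>\<omega> k. sc (F \<omega>) k)"
    define wE where "wE = SW (\<Delta> h) (\<lambda>p q. sc (F (\<phi> p)) q)"
    have "\<Phi> (c * (wD - wE)) = 0" for c
    proof -
      have cI: "(\<lambda>z. \<Phi> (c*z)) \<in> dual_I \<Phi>" unfolding dual_I_def by blast
      have "conv \<Delta> (\<lambda>z. \<Phi> (c*z)) (\<phi> h) y = SW D (\<lambda>\<omega> k. \<Phi> (c*k) * \<omega> y)" for y
        using dc hI cI unfolding dual_coaction_def D_def SW_def by blast
      then have "F (\<lambda>y. SW D (\<lambda>\<omega> k. \<Phi> (c*k) * \<omega> y)) = F (\<lambda>y. SW (\<Delta> h) (\<lambda>p q. \<Phi> (c*q) * \<phi> p y))"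
        using key by simp
      then have "SW D (\<lambda>\<omega> k. \<Phi> (c*k) * F \<omega>) = SW (\<Delta> h) (\<lambda>p q. \<Phi> (c*q) * F (\<phi> p))"
        by (simp only: lin_dual_SW[OF F])
      then show ?thesis unfolding wD_def wE_def by (simp add: right_diff_distrib SW_mult_left mult.commute)
    qed
    then have "wD - wE = 0" by (rule F_left)
    then have "g wD = g wE" by simp
    then show ?thesis unfolding wD_def wE_def D_def ten2_SW using g by (simp add: lin_SW lin_def)
  qed
  show ?thesis unfolding YD_isomorphic_def
    apply (rule exI[of _ \<phi>])
    using l1 l2 inj img act coact by (auto simp: bij_betw_def)
qed

lemma main: assumes "dual_coaction \<Delta> \<Phi> \<delta>" shows "YD_isomorphic sc \<Delta> S \<Phi> \<delta> \<longleftrightarrow> Kac_type \<Phi>"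
  using YD_imp_Kac[OF assms] Kac_imp_YD[OF assms] by blast

end


theorem mainTheorem8:
  fixes sc :: "complex \<Rightarrow> 'h::ring_1 \<Rightarrow> 'h"
    and \<Delta> :: "'h \<Rightarrow> ('h \<times> 'h) list"
    and \<epsilon> :: "'h \<Rightarrow> complex"
    and S st :: "'h \<Rightarrow> 'h"
    and \<Phi> :: "'h \<Rightarrow> complex"
    and \<delta> :: "('h \<Rightarrow> complex) \<Rightarrow> (('h \<Rightarrow> complex) \<times> 'h) list"
  assumes "CQG_Hopf_star_algebra sc \<Delta> \<epsilon> S st \<Phi>"
    and "dual_coaction \<Delta> \<Phi> \<delta>"
  shows "YD_isomorphic sc \<Delta> S \<Phi> \<delta> \<longleftrightarrow> Kac_type \<Phi>"
proof -
  interpret cqg sc \<Delta> \<epsilon> S st \<Phi> by (rule cqg.intro) (rule assms(1))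
  show ?thesis by (rule main[OF assms(2)])
qed

end
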